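(* Let $Q^-=(-1,0)\times(-1,1)$, $Q^+=(0,1)\times(-1,1)$. Let $g:(-1,1)^2\to\mathbb{R}^2$ satisfy: (a) $g|_{Q^\pm}=P^\pm$ for polynomial maps $P^\pm:\mathbb{R}^2\to\mathbb{R}^2$ of degree at most two; (b) $g\in C^1((-1,1)^2;\mathbb{R}^2)$ (so $g$ is $C^1$ across the interface $\{0\}\times(-1,1)$); (c) $\det Dg\geq\lambda>0$ on $Q^-\cup Q^+$. Fix $\eta\in C^\infty(\mathbb{R})$ with $\eta(t)=0$ for $t\leq-1$ and $\eta(t)=1$ for $t\geq1$, set $\eta_\varepsilon(t)=\eta(t/\varepsilon)$, and for $0<\varepsilon<1$ define on $Q^-\cup Q^+$ \[ g_\varepsilon(x)=\begin{cases}P^-(x)+\eta_\varepsilon(x_1)\bigl(P^+(x)-P^-(x)\bigr), & |x_1|<\varepsilon,\\ g(x), & |x_1|\geq\varepsilon.\end{cases} \] Then: (i) $g_\varepsilon\in C^\infty(Q^-\cup Q^+)$; (ii) $g_\varepsilon=g$ on $\{|x_1|\geq\varepsilon\}$; (iii) $g_\varepsilon\to g$ in $W^{2,1}(Q^-\cup Q^+)$ as $\varepsilon\downarrow0$; (iv) there is a constant $C$ independent of $\varepsilon$ with $\|Dg_\varepsilon-Dg\|_{L^\infty(Q^-\cup Q^+)}\leq C\varepsilon$; (v) $\det Dg_\varepsilon\geq\lambda/2$ on $Q^-\cup Q^+$ for all sufficiently small $\varepsilon$. *)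

theory Defs
  imports "HOL-Analysis.Analysis"
begin

definition Qminus :: "(real \<times> real) set" where
  "Qminus = {-1<..<0} \<times> {-1<..<1}"

definition Qplus :: "(real \<times> real) set" where
  "Qplus = {0<..<1} \<times> {-1<..<1}"

definition Square :: "(real \<times> real) set" where
  "Square = {-1<..<1} \<times> {-1<..<1}"

definition dd :: "'a::real_normed_vector \<Rightarrow> ('a \<Rightarrow> 'b::real_normed_vector) \<Rightarrow> 'a \<Rightarrow> 'b" where
  "dd v f x = frechet_derivative f (at x) v"

primrec Ck :: "nat \<Rightarrow> 'a::real_normed_vector set \<Rightarrow> ('a \<Rightarrow> 'b::real_normed_vector) \<Rightarrow> bool" where
  "Ck 0 S f = continuous_on S f"
| "Ck (Suc n) S f = (f differentiable_on S \<and> (\<forall>v. Ck n S (\<lambda>x. frechet_derivative f (at x) v)))"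

definition smooth_on :: "'a::real_normed_vector set \<Rightarrow> ('a \<Rightarrow> 'b::real_normed_vector) \<Rightarrow> bool" where
  "smooth_on S f \<longleftrightarrow> (\<forall>n. Ck n S f)"

definition poly_map_deg2 :: "(real \<times> real \<Rightarrow> real \<times> real) \<Rightarrow> bool" where
  "poly_map_deg2 P \<longleftrightarrow> (\<exists>c :: nat \<Rightarrow> nat \<Rightarrow> real \<times> real.
      P = (\<lambda>x. \<Sum>j\<le>2. \<Sum>k\<le>2 - j. (fst x ^ j * snd x ^ k) *\<^sub>R c j k))"

definition jdet :: "(real \<times> real \<Rightarrow> real \<times> real) \<Rightarrow> real" where
  "jdet L = fst (L (1,0)) * snd (L (0,1)) - snd (L (1,0)) * fst (L (0,1))"

text \<open>\<open>W^{2,1}(U)\<close> distance via classical derivatives of order \<open>\<le> 2\<close>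
  (valid for functions smooth on the open set U).\<close>
definition W21_dist :: "'a::euclidean_space set \<Rightarrow> ('a \<Rightarrow> 'b::real_normed_vector) \<Rightarrow> ('a \<Rightarrow> 'b) \<Rightarrow> ennreal" where
  "W21_dist U f h = (\<integral>\<^sup>+ x\<in>U. ennreal
      (norm (f x - h x)
       + (\<Sum>i\<in>Basis. norm (dd i (\<lambda>y. f y - h y) x))
       + (\<Sum>i\<in>Basis. \<Sum>j\<in>Basis. norm (dd j (dd i (\<lambda>y. f y - h y)) x))) \<partial>lborel)"

definition g_eps :: "(real \<Rightarrow> real) \<Rightarrow> (real \<times> real \<Rightarrow> real \<times> real) \<Rightarrow> (real \<times> real \<Rightarrow> real \<times> real)
    \<Rightarrow> (real \<times> real \<Rightarrow> real \<times> real) \<Rightarrow> real \<Rightarrow> real \<times> real \<Rightarrow> real \<times> real" where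
  "g_eps \<eta> Pm Pp g \<epsilon> x =
     (if \<bar>fst x\<bar> < \<epsilon> then Pm x + \<eta> (fst x / \<epsilon>) *\<^sub>R (Pp x - Pm x) else g x)"

end

theory Submission
  imports Defs
begin

lemma Ck_Suc_imp: "Ck (Suc n) S f \<Longrightarrow> Ck n S f"
proof (induction n arbitrary: f)
  case 0 then show ?case by (simp add: differentiable_imp_continuous_on)
next
  case (Suc n) then show ?case by simp
qed

lemma Ck_subset: "Ck n S f \<Longrightarrow> T \<subseteq> S \<Longrightarrow> Ck n T f"
proof (induction n arbitrary: f)
  case 0 then show ?case by (simp add: continuous_on_subset)
next
  case (Suc n) then show ?case by (auto intro: differentiable_on_subset)
qed

lemma frechet_eq_open:
  assumes "open S" "x \<in> S" "\<forall>y\<in>S. f y = h y"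
  shows "frechet_derivative f (at x) = frechet_derivative h (at x)"
proof -
  have "(f has_derivative D) (at x) \<longleftrightarrow> (h has_derivative D) (at x)" for D
    using assms by (metis has_derivative_transform_within_open)
  then show ?thesis unfolding frechet_derivative_def by simp
qed

lemma Ck_transfer:
  assumes "open S" "\<forall>x\<in>S. f x = h x" "Ck n S f"
  shows "Ck n S h"
  using assms
proof (induction n arbitrary: f h)
  case 0 then show ?case using continuous_on_eq by (metis Ck.simps(1))
next
  case (Suc n)
  have d: "h differentiable_on S"
  proof -
    have "h differentiable (at x)" if "x \<in> S" for x
    proof -
      have "f differentiable (at x)"
        using Suc.prems that by (simp add: differentiable_on_eq_differentiable_at)
      then obtain D where "(f has_derivative D) (at x)" unfolding differentiable_def by blast
      then have "(h has_derivative D) (at x)"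
        by (rule has_derivative_transform_within_open[OF _ \<open>open S\<close> that]) (use Suc.prems in simp)
      then show ?thesis unfolding differentiable_def by blast
    qed
    then show ?thesis using Suc.prems by (simp add: differentiable_on_eq_differentiable_at)
  qed
  have "Ck n S (\<lambda>x. frechet_derivative h (at x) v)" for v
  proof (rule Suc.IH[of "\<lambda>x. frechet_derivative f (at x) v"])
    show "open S" by fact
    show "\<forall>x\<in>S. frechet_derivative f (at x) v = frechet_derivative h (at x) v"
      using frechet_eq_open[OF \<open>open S\<close> _ Suc.prems(2)] by simp
    show "Ck n S (\<lambda>x. frechet_derivative f (at x) v)" using Suc.prems(3) by simp
  qed
  then show ?case using d by simp
qed

lemma Ck_SucI:
  assumes "open S" "\<And>x. x \<in> S \<Longrightarrow> (f has_derivative D x) (at x)"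
    "\<And>v. Ck n S (\<lambda>x. D x v)"
  shows "Ck (Suc n) S f"
proof -
  have "f differentiable_on S" using assms(1,2) differentiable_def
    by (metis differentiable_at_imp_differentiable_on)
  moreover have "Ck n S (\<lambda>x. frechet_derivative f (at x) v)" for v
  proof (rule Ck_transfer[OF assms(1) _ assms(3)[of v]])
    show "\<forall>x\<in>S. D x v = frechet_derivative f (at x) v"
      using assms(2) frechet_derivative_at by metis
  qed
  ultimately show ?thesis by simp
qed

lemma Ck_diff_at: "Ck (Suc n) S f \<Longrightarrow> open S \<Longrightarrow> x \<in> S \<Longrightarrow>
   (f has_derivative frechet_derivative f (at x)) (at x)"
  by (simp add: differentiable_on_eq_differentiable_at frechet_derivative_works)
lemma Ck_const: "open S \<Longrightarrow> Ck n S (\<lambda>x. c)"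
proof (induction n arbitrary: c)
  case 0 then show ?case by simp
next
  case (Suc n)
  show ?case by (rule Ck_SucI[where D="\<lambda>x v. 0"]) (use Suc in auto)
qed

lemma Ck_add:
  assumes "open S" "Ck n S f" "Ck n S h"
  shows "Ck n S (\<lambda>x. f x + h x)"
  using assms(2,3)
proof (induction n arbitrary: f h)
  case 0 then show ?case by (simp add: continuous_on_add)
next
  case (Suc n)
  show ?case
  proof (rule Ck_SucI[where D="\<lambda>x v. frechet_derivative f (at x) v + frechet_derivative h (at x) v"])
    show "open S" by fact
    fix x assume "x \<in> S"
    show "((\<lambda>x. f x + h x) has_derivative (\<lambda>v. frechet_derivative f (at x) v + frechet_derivative h (at x) v)) (at x)"
      using Ck_diff_at[OF Suc.prems(1) assms(1) \<open>x\<in>S\<close>] Ck_diff_at[OF Suc.prems(2) assms(1) \<open>x\<in>S\<close>]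
      by (rule has_derivative_add)
  next
    fix v show "Ck n S (\<lambda>x. frechet_derivative f (at x) v + frechet_derivative h (at x) v)"
      using Suc by simp
  qed
qed

lemma Ck_scaleR:
  fixes f :: "'a::real_normed_vector \<Rightarrow> real"
  assumes "open S" "Ck n S f" "Ck n S h"
  shows "Ck n S (\<lambda>x. f x *\<^sub>R h x)"
  using assms(2,3)
proof (induction n arbitrary: f h)
  case 0 then show ?case by (simp add: continuous_on_scaleR)
next
  case (Suc n)
  show ?case
  proof (rule Ck_SucI[where D="\<lambda>x v. f x *\<^sub>R frechet_derivative h (at x) v + frechet_derivative f (at x) v *\<^sub>R h x"])
    show "open S" by fact
    fix x assume "x \<in> S"
    show "((\<lambda>x. f x *\<^sub>R h x) has_derivative (\<lambda>v. f x *\<^sub>R frechet_derivative h (at x) v + frechet_derivative f (at x) v *\<^sub>R h x)) (at x)"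
      using Ck_diff_at[OF Suc.prems(1) assms(1) \<open>x\<in>S\<close>] Ck_diff_at[OF Suc.prems(2) assms(1) \<open>x\<in>S\<close>]
      by (rule has_derivative_scaleR)
  next
    fix v
    have "Ck n S (\<lambda>x. f x *\<^sub>R frechet_derivative h (at x) v)"
      using Suc.IH[of f "\<lambda>x. frechet_derivative h (at x) v"] Suc.prems Ck_Suc_imp by auto
    moreover have "Ck n S (\<lambda>x. frechet_derivative f (at x) v *\<^sub>R h x)"
      using Suc.IH[of "\<lambda>x. frechet_derivative f (at x) v" h] Suc.prems Ck_Suc_imp by auto
    ultimately show "Ck n S (\<lambda>x. f x *\<^sub>R frechet_derivative h (at x) v + frechet_derivative f (at x) v *\<^sub>R h x)"
      using Ck_add[OF assms(1)] by blast
  qed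
qed

lemma Ck_mult:
  fixes f h :: "'a::real_normed_vector \<Rightarrow> real"
  assumes "open S" "Ck n S f" "Ck n S h"
  shows "Ck n S (\<lambda>x. f x * h x)"
  using Ck_scaleR[OF assms] by simp

lemma Ck_power:
  fixes f :: "'a::real_normed_vector \<Rightarrow> real"
  assumes "open S" "Ck n S f"
  shows "Ck n S (\<lambda>x. f x ^ k)"
proof (induction k)
  case 0 then show ?case using Ck_const[OF assms(1)] by simp
next
  case (Suc k) then show ?case using Ck_mult[OF assms(1) assms(2)] by simp
qed

lemma Ck_sum:
  assumes "open S" "finite I" "\<And>i. i \<in> I \<Longrightarrow> Ck n S (f i)"
  shows "Ck n S (\<lambda>x. \<Sum>i\<in>I. f i x)"
  using assms(2,3)
proof (induction I rule: finite_induct)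
  case empty then show ?case using Ck_const[OF assms(1)] by simp
next
  case (insert i I)
  have "Ck n S (f i)" "Ck n S (\<lambda>x. \<Sum>i\<in>I. f i x)" using insert by auto
  from Ck_add[OF assms(1) this] show ?case using insert by simp
qed

lemma Ck_linear:
  assumes "open S" "bounded_linear L"
  shows "Ck n S L"
proof (cases n)
  case 0 then show ?thesis using assms linear_continuous_on by auto
next
  case (Suc m)
  show ?thesis unfolding Suc
    by (rule Ck_SucI[where D="\<lambda>x. L"]) (use assms bounded_linear_imp_has_derivative Ck_const in auto)
qed

lemma Ck_fst: "open S \<Longrightarrow> Ck n S fst" by (rule Ck_linear) (auto intro: bounded_linear_fst)
lemma Ck_snd: "open S \<Longrightarrow> Ck n S snd" by (rule Ck_linear) (auto intro: bounded_linear_snd)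

lemma real_lin_1: "bounded_linear (L::real\<Rightarrow>real) \<Longrightarrow> L h = h * L 1"
  by (metis bounded_linear.linear linear_cmul mult.right_neutral real_scaleR_def)

lemma Ck_comp_fst:
  fixes \<eta>0 :: "real \<Rightarrow> real"
  assumes "Ck n UNIV \<eta>0"
  shows "Ck n UNIV (\<lambda>x::real\<times>real. \<eta>0 (fst x / e))"
  using assms
proof (induction n arbitrary: \<eta>0)
  case 0
  have c: "continuous_on UNIV (\<lambda>x::real\<times>real. fst x * (1/e))" by (intro continuous_intros)
  have "continuous_on UNIV (\<lambda>x::real\<times>real. \<eta>0 (fst x * (1/e)))"
    using continuous_on_compose2[OF _ c, of UNIV \<eta>0] 0 by simp
  then have "continuous_on UNIV (\<lambda>x::real\<times>real. \<eta>0 (fst x / e))" by simp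
  then show ?case by simp
next
  case (Suc n)
  define \<eta>1 where "\<eta>1 t = frechet_derivative \<eta>0 (at t) 1" for t
  have d: "(\<eta>0 has_derivative frechet_derivative \<eta>0 (at t)) (at t)" for t
    using Ck_diff_at[OF Suc.prems] by simp
  have lin: "frechet_derivative \<eta>0 (at t) h = h * \<eta>1 t" for t h
    using real_lin_1 d has_derivative_bounded_linear \<eta>1_def by metis
  have IH: "Ck n UNIV (\<lambda>x::real\<times>real. \<eta>1 (fst x / e))"
    using Suc.IH[of \<eta>1] Suc.prems unfolding \<eta>1_def by simp
  show ?case
  proof (rule Ck_SucI[where D="\<lambda>(x::real\<times>real) (v::real\<times>real). (fst v / e) * \<eta>1 (fst x / e)"])
    fix x :: "real\<times>real"
    have "((\<lambda>x. \<eta>0 (fst x / e)) has_derivative (\<lambda>v. frechet_derivative \<eta>0 (at (fst x / e)) (fst v / e))) (at x)"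
    proof (rule has_derivative_compose[of "\<lambda>x. fst x / e" "\<lambda>v. fst v / e" x UNIV \<eta>0, OF _ d])
      show "((\<lambda>x. fst x / e) has_derivative (\<lambda>v. fst v / e)) (at x)"
        by (rule bounded_linear_imp_has_derivative)
           (rule bounded_linear_compose[OF bounded_linear_divide bounded_linear_fst])
    qed
    then show "((\<lambda>x. \<eta>0 (fst x / e)) has_derivative (\<lambda>v. (fst v / e) * \<eta>1 (fst x / e))) (at x)"
      by (simp add: lin)
  next
    fix v :: "real\<times>real"
    show "Ck n UNIV (\<lambda>x::real\<times>real. fst v / e * \<eta>1 (fst x / e))"
      by (rule Ck_mult[OF open_UNIV Ck_const[OF open_UNIV] IH])
  qed simp
qed


lemma smooth_Ck: "smooth_on S f \<Longrightarrow> Ck n S f" by (simp add: smooth_on_def)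

lemma poly_Ck: "poly_map_deg2 P \<Longrightarrow> Ck n UNIV P"
proof -
  assume "poly_map_deg2 P"
  then obtain c where P: "P = (\<lambda>x. \<Sum>j\<le>2. \<Sum>k\<le>2 - j. (fst x ^ j * snd x ^ k) *\<^sub>R c j k)"
    unfolding poly_map_deg2_def by blast
  have t: "Ck n UNIV (\<lambda>x::real\<times>real. (fst x ^ j * snd x ^ k) *\<^sub>R c j k)" for j k
    by (rule Ck_scaleR[OF open_UNIV Ck_mult[OF open_UNIV Ck_power[OF open_UNIV Ck_fst[OF open_UNIV]]
          Ck_power[OF open_UNIV Ck_snd[OF open_UNIV]]] Ck_const[OF open_UNIV]])
  have "Ck n UNIV (\<lambda>x::real\<times>real. \<Sum>j\<le>2. \<Sum>k\<le>2 - j. (fst x ^ j * snd x ^ k) *\<^sub>R c j k)"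
  proof (rule Ck_sum[OF open_UNIV])
    fix j
    show "Ck n UNIV (\<lambda>x::real\<times>real. \<Sum>k\<le>2 - j. (fst x ^ j * snd x ^ k) *\<^sub>R c j k)"
      by (rule Ck_sum[OF open_UNIV]) (simp, rule t)
  qed simp
  then show ?thesis using P by simp
qed

lemma deriv_zero_left:
  fixes f :: "real \<Rightarrow> real"
  assumes "(f has_real_derivative D) (at t)" "\<forall>s\<le>t. f s = f t"
  shows "D = 0"
proof -
  have "((\<lambda>y. (f y - f t) / (y - t)) \<longlongrightarrow> D) (at_left t)"
    using assms(1) has_field_derivative_iff has_field_derivative_at_within by blast
  moreover have "((\<lambda>y. (f y - f t) / (y - t)) \<longlongrightarrow> 0) (at_left t)"
  proof (rule tendsto_eventually)
    have e: "f y = f t" if "y < t" for y by (meson assms(2) less_imp_le that)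
    show "\<forall>\<^sub>F y in at_left t. (f y - f t) / (y - t) = 0"
      unfolding eventually_at_filter by (rule always_eventually) (simp add: e)
  qed
  ultimately show ?thesis by (rule tendsto_unique[OF trivial_limit_at_left_real])
qed

lemma deriv_zero_right:
  fixes f :: "real \<Rightarrow> real"
  assumes "(f has_real_derivative D) (at t)" "\<forall>s\<ge>t. f s = f t"
  shows "D = 0"
proof -
  have "((\<lambda>y. (f y - f t) / (y - t)) \<longlongrightarrow> D) (at_right t)"
    using assms(1) has_field_derivative_iff has_field_derivative_at_within by blast
  moreover have "((\<lambda>y. (f y - f t) / (y - t)) \<longlongrightarrow> 0) (at_right t)"
  proof (rule tendsto_eventually)
    have e: "f y = f t" if "y > t" for y by (meson assms(2) less_imp_le that)
    show "\<forall>\<^sub>F y in at_right t. (f y - f t) / (y - t) = 0"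
      unfolding eventually_at_filter by (rule always_eventually) (simp add: e)
  qed
  ultimately show ?thesis by (rule tendsto_unique[OF trivial_limit_at_right_real])
qed

lemma global_bound:
  fixes f :: "real \<Rightarrow> real"
  assumes "continuous_on UNIV f" "\<forall>t. \<bar>t\<bar> \<ge> 1 \<longrightarrow> \<bar>f t\<bar> \<le> A"
  shows "\<exists>M. \<forall>t. \<bar>f t\<bar> \<le> M"
proof -
  have "compact (f ` {-1..1})"
    by (rule compact_continuous_image) (use assms(1) continuous_on_subset in auto)
  then have "bounded (f ` {-1..1})" by (rule compact_imp_bounded)
  then obtain B where B: "\<forall>y\<in>f ` {-1..1}. norm y \<le> B"
    unfolding bounded_iff by blast
  have "\<bar>f t\<bar> \<le> max A B" for t
  proof (cases "\<bar>t\<bar> \<ge> 1")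
    case True then show ?thesis using assms(2) by force
  next
    case False then have "t \<in> {-1..1}" by auto
    then show ?thesis using B by force
  qed
  then show ?thesis by blast
qed

lemma real_deriv_of_frechet:
  fixes f :: "real \<Rightarrow> real"
  assumes "f differentiable (at t)"
  shows "(f has_real_derivative frechet_derivative f (at t) 1) (at t)"
proof -
  have d: "(f has_derivative frechet_derivative f (at t)) (at t)"
    using assms frechet_derivative_works by blast
  show ?thesis
    by (rule has_derivative_imp_has_field_derivative[OF d])
       (rule sym[OF real_lin_1[OF has_derivative_bounded_linear[OF d]]])
qed

lemma eta_facts:
  fixes \<eta> :: "real \<Rightarrow> real"
  assumes eta: "smooth_on (UNIV :: real set) \<eta>"
    and eta0: "\<forall>t\<le>-1. \<eta> t = 0" and eta1: "\<forall>t\<ge>1. \<eta> t = 1"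
  shows "\<exists>\<eta>1 \<eta>2 M0 M1 M2. (\<forall>t. (\<eta> has_real_derivative \<eta>1 t) (at t))
     \<and> (\<forall>t. (\<eta>1 has_real_derivative \<eta>2 t) (at t))
     \<and> (\<forall>t. \<bar>\<eta> t\<bar> \<le> M0) \<and> (\<forall>t. \<bar>\<eta>1 t\<bar> \<le> M1) \<and> (\<forall>t. \<bar>\<eta>2 t\<bar> \<le> M2)
     \<and> (\<forall>t. t \<le> -1 \<longrightarrow> \<eta>1 t = 0 \<and> \<eta>2 t = 0) \<and> (\<forall>t. t \<ge> 1 \<longrightarrow> \<eta>1 t = 0 \<and> \<eta>2 t = 0)"
proof -
  define \<eta>1 where "\<eta>1 t = frechet_derivative \<eta> (at t) 1" for t
  define \<eta>2 where "\<eta>2 t = frechet_derivative \<eta>1 (at t) 1" for t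
  have C3: "Ck 3 UNIV \<eta>" using eta smooth_Ck by blast
  have d0: "(\<eta> has_real_derivative \<eta>1 t) (at t)" for t
    unfolding \<eta>1_def
    by (rule real_deriv_of_frechet) (use C3 in \<open>simp add: numeral_3_eq_3 differentiable_on_eq_differentiable_at\<close>)
  have C2: "Ck 2 UNIV \<eta>1" using C3 unfolding \<eta>1_def by (simp add: numeral_3_eq_3 numeral_2_eq_2)
  have d1: "(\<eta>1 has_real_derivative \<eta>2 t) (at t)" for t
    unfolding \<eta>2_def
    by (rule real_deriv_of_frechet) (use C2 in \<open>simp add: numeral_2_eq_2 differentiable_on_eq_differentiable_at\<close>)
  have c2: "continuous_on UNIV \<eta>2" using C2 unfolding \<eta>2_def by (simp add: numeral_2_eq_2 differentiable_imp_continuous_on)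
  have c1: "continuous_on UNIV \<eta>1" using C2 by (simp add: numeral_2_eq_2 differentiable_imp_continuous_on)
  have c0: "continuous_on UNIV \<eta>" using C3 by (simp add: numeral_3_eq_3 differentiable_imp_continuous_on)
  have z1l: "\<eta>1 t = 0" if "t \<le> -1" for t
    by (rule deriv_zero_left[OF d0]) (use that eta0 in auto)
  have z1r: "\<eta>1 t = 0" if "t \<ge> 1" for t
    by (rule deriv_zero_right[OF d0]) (use that eta1 in auto)
  have z2l: "\<eta>2 t = 0" if "t \<le> -1" for t
    by (rule deriv_zero_left[OF d1]) (use that z1l in auto)
  have z2r: "\<eta>2 t = 0" if "t \<ge> 1" for t
    by (rule deriv_zero_right[OF d1]) (use that z1r in auto)
  have "\<bar>\<eta> t\<bar> \<le> 1" if "\<bar>t\<bar> \<ge> 1" for t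
  proof (cases "t \<ge> 1")
    case True then show ?thesis using eta1 by simp
  next
    case False then have "t \<le> -1" using that by linarith
    then show ?thesis using eta0 by simp
  qed
  then obtain M0 where M0: "\<forall>t. \<bar>\<eta> t\<bar> \<le> M0"
    using global_bound[OF c0, of 1] by blast
  have "\<bar>\<eta>1 t\<bar> \<le> 0" if "\<bar>t\<bar> \<ge> 1" for t
  proof (cases "t \<ge> 1")
    case True then show ?thesis using z1r by simp
  next
    case False then have "t \<le> -1" using that by linarith
    then show ?thesis using z1l by simp
  qed
  then obtain M1 where M1: "\<forall>t. \<bar>\<eta>1 t\<bar> \<le> M1"
    using global_bound[OF c1, of 0] by blast
  have "\<bar>\<eta>2 t\<bar> \<le> 0" if "\<bar>t\<bar> \<ge> 1" for t
  proof (cases "t \<ge> 1")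
    case True then show ?thesis using z2r by simp
  next
    case False then have "t \<le> -1" using that by linarith
    then show ?thesis using z2l by simp
  qed
  then obtain M2 where M2: "\<forall>t. \<bar>\<eta>2 t\<bar> \<le> M2"
    using global_bound[OF c2, of 0] by blast
  show ?thesis
    apply (rule exI[of _ \<eta>1], rule exI[of _ \<eta>2], rule exI[of _ M0], rule exI[of _ M1], rule exI[of _ M2])
    apply (intro conjI allI impI)
    apply (rule d0) apply (rule d1) apply (rule M0[rule_format]) apply (rule M1[rule_format])
    apply (rule M2[rule_format]) apply (erule z1l) apply (erule z2l) apply (erule z1r) apply (erule z2r)
    done
qed

lemma poly_expand:
  assumes "poly_map_deg2 P"
  shows "\<exists>a00 a01 a02 a10 a11 a20. \<forall>x y. P (x,y) = a00 + y *\<^sub>R a01 + (y^2) *\<^sub>R a02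
      + x *\<^sub>R a10 + (x*y) *\<^sub>R a11 + (x^2) *\<^sub>R a20"
proof -
  from assms obtain c where P: "P = (\<lambda>x. \<Sum>j\<le>2. \<Sum>k\<le>2 - j. (fst x ^ j * snd x ^ k) *\<^sub>R c j k)"
    unfolding poly_map_deg2_def by blast
  have "P (x,y) = c 0 0 + y *\<^sub>R c 0 1 + (y^2) *\<^sub>R c 0 2
      + x *\<^sub>R c 1 0 + (x*y) *\<^sub>R c 1 1 + (x^2) *\<^sub>R c 2 0" for x y
    unfolding P by (simp add: numeral_2_eq_2 algebra_simps)
  then show ?thesis by blast
qed


lemma path_lim:
  fixes F :: "real \<times> real \<Rightarrow> 'b::real_normed_vector"
  assumes "continuous_on S F" "open S" "(s,y) \<in> S"
  shows "((\<lambda>t. F (t,y)) \<longlongrightarrow> F (s,y)) (at s within T)"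
proof -
  have c2: "isCont F (s,y)" using assms continuous_on_eq_continuous_at by blast
  have c1: "isCont (\<lambda>t. (t,y)) s" by (intro continuous_intros)
  have "isCont (\<lambda>t. F (t,y)) s" using isCont_o2[OF c1 c2] by simp
  then have "((\<lambda>t. F (t,y)) \<longlongrightarrow> F (s,y)) (at s)" unfolding isCont_def by simp
  then show ?thesis by (rule tendsto_mono[OF at_le[OF subset_UNIV]])
qed

lemma open_Qminus: "open Qminus" unfolding Qminus_def by (intro open_Times open_greaterThanLessThan)
lemma open_Qplus: "open Qplus" unfolding Qplus_def by (intro open_Times open_greaterThanLessThan)
lemma open_Square: "open Square" unfolding Square_def by (intro open_Times open_greaterThanLessThan)

lemma interface_b:
  fixes g Pm Pp :: "real \<times> real \<Rightarrow> real \<times> real"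
  assumes Pm: "poly_map_deg2 Pm" and Pp: "poly_map_deg2 Pp"
    and gm: "\<forall>x\<in>Qminus. g x = Pm x" and gp: "\<forall>x\<in>Qplus. g x = Pp x"
    and gC1: "Ck 1 Square g"
  shows "\<exists>b. \<forall>x. Pp x = Pm x + (fst x)^2 *\<^sub>R b"
proof -
  obtain am00 am01 am02 am10 am11 am20 where Am: "\<And>x y. Pm (x,y) = am00 + y *\<^sub>R am01 + (y^2) *\<^sub>R am02
      + x *\<^sub>R am10 + (x*y) *\<^sub>R am11 + (x^2) *\<^sub>R am20"
    using poly_expand[OF Pm] by blast
  obtain ap00 ap01 ap02 ap10 ap11 ap20 where Ap: "\<And>x y. Pp (x,y) = ap00 + y *\<^sub>R ap01 + (y^2) *\<^sub>R ap02
      + x *\<^sub>R ap10 + (x*y) *\<^sub>R ap11 + (x^2) *\<^sub>R ap20"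
    using poly_expand[OF Pp] by blast
  define d00 where "d00 = ap00 - am00"
  define d01 where "d01 = ap01 - am01"
  define d02 where "d02 = ap02 - am02"
  define d10 where "d10 = ap10 - am10"
  define d11 where "d11 = ap11 - am11"
  define d20 where "d20 = ap20 - am20"
  have R: "Pp (x,y) - Pm (x,y) = d00 + y *\<^sub>R d01 + (y^2) *\<^sub>R d02 + x *\<^sub>R d10 + (x*y) *\<^sub>R d11 + (x^2) *\<^sub>R d20" for x y
    unfolding Am Ap d00_def d01_def d02_def d10_def d11_def d20_def by (simp add: algebra_simps)
  have gc: "continuous_on Square g" using Ck_Suc_imp[of 0 Square g] gC1 by simp
  have Pmc: "continuous_on UNIV Pm" using poly_Ck[OF Pm, of 0] by simp
  have Ppc: "continuous_on UNIV Pp" using poly_Ck[OF Pp, of 0] by simp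
  have step1: "Pp (0,y) = g (0,y) \<and> Pm (0,y) = g (0,y)" if y: "-1 < y" "y < 1" for y
  proof
    have sq: "(0,y) \<in> Square" using y unfolding Square_def by auto
    have "((\<lambda>t. g (t,y)) \<longlongrightarrow> g (0,y)) (at_right 0)" by (rule path_lim[OF gc open_Square sq])
    moreover have "\<forall>\<^sub>F t in at_right 0. g (t,y) = Pp (t,y)"
      by (rule eventually_at_rightI[of 0 1]) (use y gp in \<open>auto simp: Qplus_def\<close>)
    ultimately have "((\<lambda>t. Pp (t,y)) \<longlongrightarrow> g (0,y)) (at_right 0)"
      using Lim_transform_eventually by fastforce
    moreover have "((\<lambda>t. Pp (t,y)) \<longlongrightarrow> Pp (0,y)) (at_right 0)"
      by (rule path_lim[OF Ppc open_UNIV]) simp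
    ultimately show "Pp (0,y) = g (0,y)" using tendsto_unique[OF trivial_limit_at_right_real] by blast
  next
    have sq: "(0,y) \<in> Square" using y unfolding Square_def by auto
    have "((\<lambda>t. g (t,y)) \<longlongrightarrow> g (0,y)) (at_left 0)" by (rule path_lim[OF gc open_Square sq])
    moreover have "\<forall>\<^sub>F t in at_left 0. g (t,y) = Pm (t,y)"
      by (rule eventually_at_leftI[of "-1" 0]) (use y gm in \<open>auto simp: Qminus_def\<close>)
    ultimately have "((\<lambda>t. Pm (t,y)) \<longlongrightarrow> g (0,y)) (at_left 0)"
      using Lim_transform_eventually by fastforce
    moreover have "((\<lambda>t. Pm (t,y)) \<longlongrightarrow> Pm (0,y)) (at_left 0)"
      by (rule path_lim[OF Pmc open_UNIV]) simp
    ultimately show "Pm (0,y) = g (0,y)" using tendsto_unique[OF trivial_limit_at_left_real] by blast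
  qed
  have R0: "d00 + y *\<^sub>R d01 + (y^2) *\<^sub>R d02 = 0" if "-1 < y" "y < 1" for y
    using R[of 0 y] step1[OF that] by simp
  have gd: "g differentiable_on Square" using gC1 by simp
  have Pmd: "Pm differentiable (at z)" for z
    using poly_Ck[OF Pm, of 1] by (cases z) (simp add: differentiable_on_eq_differentiable_at)
  have step2: "d10 + y *\<^sub>R d11 = 0" if y: "-1 < y" "y < 1" for y
  proof -
    have sq: "(0,y) \<in> Square" using y unfolding Square_def by auto
    define \<phi> where "\<phi> t = g (t,y) - Pm (t,y)" for t
    have pd: "(\<lambda>t::real. (t,y)) differentiable (at 0)"
      unfolding differentiable_def by (rule exI) (auto intro!: derivative_eq_intros)
    have g0: "g differentiable (at ((\<lambda>t::real. (t,y)) 0))"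
      using gd sq open_Square by (simp add: differentiable_on_eq_differentiable_at)
    have "(g \<circ> (\<lambda>t. (t,y))) differentiable (at 0)"
      by (rule differentiable_chain_at[OF pd g0])
    moreover have "(Pm \<circ> (\<lambda>t. (t,y))) differentiable (at 0)"
      by (rule differentiable_chain_at[OF pd Pmd])
    ultimately have "\<phi> differentiable (at 0)"
      unfolding \<phi>_def using differentiable_diff by (fastforce simp: o_def)
    then obtain V where V: "(\<phi> has_vector_derivative V) (at 0)"
      using vector_derivative_works by blast
    have phi0: "\<phi> 0 = 0" using step1[OF y] unfolding \<phi>_def by simp
    have "((\<lambda>t. 0) has_vector_derivative 0) (at 0 within cbox (-1/2) 0)"
      by (rule has_vector_derivative_const)
    then have L0: "(\<phi> has_vector_derivative 0) (at 0 within cbox (-1/2) 0)"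
    proof (rule has_vector_derivative_transform[rotated 2])
      show "(0::real) \<in> cbox (-1/2) 0" by simp
      fix t :: real assume t: "t \<in> cbox (-1/2) 0"
      show "\<phi> t = 0"
      proof (cases "t = 0")
        case True then show ?thesis using phi0 by simp
      next
        case False
        then have "(t,y) \<in> Qminus" using t y unfolding Qminus_def by auto
        then show ?thesis using gm unfolding \<phi>_def by simp
      qed
    qed
    have "V = 0"
      by (rule vector_derivative_unique_within_closed_interval[of "-1/2" 0 0 \<phi>])
         (use L0 V has_vector_derivative_at_within in auto)
    define w where "w = d10 + y *\<^sub>R d11"
    have "((\<lambda>t. t *\<^sub>R w + (t^2) *\<^sub>R d20) has_vector_derivative w) (at 0 within cbox 0 (1/2))"
      by (auto intro!: derivative_eq_intros)
    then have R1: "(\<phi> has_vector_derivative w) (at 0 within cbox 0 (1/2))"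
    proof (rule has_vector_derivative_transform[rotated 2])
      show "(0::real) \<in> cbox 0 (1/2)" by simp
      fix t :: real assume t: "t \<in> cbox 0 (1/2)"
      show "\<phi> t = t *\<^sub>R w + (t^2) *\<^sub>R d20"
      proof (cases "t = 0")
        case True then show ?thesis using phi0 by simp
      next
        case False
        then have "(t,y) \<in> Qplus" using t y unfolding Qplus_def by auto
        then have "\<phi> t = Pp (t,y) - Pm (t,y)" using gp unfolding \<phi>_def by simp
        also have "\<dots> = (d00 + y *\<^sub>R d01 + (y^2) *\<^sub>R d02) + t *\<^sub>R w + (t^2) *\<^sub>R d20"
          unfolding R w_def by (simp add: algebra_simps)
        finally show ?thesis using R0[OF y] by simp
      qed
    qed
    have "V = w"
      by (rule vector_derivative_unique_within_closed_interval[of 0 "1/2" 0 \<phi>])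
         (use R1 V has_vector_derivative_at_within in auto)
    then show ?thesis using \<open>V = 0\<close> w_def by simp
  qed
  have z00: "d00 = 0" using R0[of 0] by simp
  have e1: "(1/2) *\<^sub>R d01 + (1/4) *\<^sub>R d02 = 0" using R0[of "1/2"] z00 by (simp add: power2_eq_square)
  have e2: "(-1/2) *\<^sub>R d01 + (1/4) *\<^sub>R d02 = 0" using R0[of "-1/2"] z00 by (simp add: power2_eq_square)
  have "fst d01 / 2 + fst d02 / 4 = 0" "snd d01 / 2 + snd d02 / 4 = 0"
    using arg_cong[OF e1, of fst] arg_cong[OF e1, of snd] by simp_all
  moreover have "- fst d01 / 2 + fst d02 / 4 = 0" "- snd d01 / 2 + snd d02 / 4 = 0"
    using arg_cong[OF e2, of fst] arg_cong[OF e2, of snd] by simp_all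
  ultimately have "fst d01 = 0" "fst d02 = 0" "snd d01 = 0" "snd d02 = 0" by linarith+
  then have z01: "d01 = 0" and z02: "d02 = 0" by (simp_all add: prod_eq_iff)
  have z10: "d10 = 0" using step2[of 0] by simp
  have "(1/2) *\<^sub>R d11 = 0" using step2[of "1/2"] z10 by simp
  then have z11: "d11 = 0" by simp
  have "Pp x = Pm x + (fst x)^2 *\<^sub>R d20" for x
  proof (cases x)
    case (Pair a c)
    have "Pp (a,c) - Pm (a,c) = a^2 *\<^sub>R d20" using R[of a c] z00 z01 z02 z10 z11 by simp
    then show ?thesis using Pair by (simp add: algebra_simps)
  qed
  then show ?thesis by blast
qed


definition Fc :: "(real \<Rightarrow> real) \<Rightarrow> real \<times> real \<Rightarrow> real \<Rightarrow> real \<Rightarrow> real \<times> real \<Rightarrow> real \<times> real" where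
  "Fc \<eta> b c e y = ((\<eta> (fst y / e) - c) * fst y ^ 2) *\<^sub>R b"

definition ec :: "(real \<Rightarrow> real) \<Rightarrow> (real \<Rightarrow> real) \<Rightarrow> real \<Rightarrow> real \<Rightarrow> real \<times> real \<Rightarrow> real" where
  "ec \<eta> \<eta>1 c e y = \<eta>1 (fst y / e) * fst y ^ 2 / e + 2 * fst y * (\<eta> (fst y / e) - c)"

definition e2c :: "(real \<Rightarrow> real) \<Rightarrow> (real \<Rightarrow> real) \<Rightarrow> (real \<Rightarrow> real) \<Rightarrow> real \<Rightarrow> real \<Rightarrow> real \<times> real \<Rightarrow> real" where
  "e2c \<eta> \<eta>1 \<eta>2 c e y = \<eta>2 (fst y / e) * fst y ^ 2 / e ^ 2 + 4 * \<eta>1 (fst y / e) * fst y / e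
     + 2 * (\<eta> (fst y / e) - c)"

lemma comp_fst_deriv:
  fixes \<phi> :: "real \<Rightarrow> real"
  assumes "(\<phi> has_real_derivative D) (at (fst y))"
  shows "((\<lambda>y. \<phi> (fst y) *\<^sub>R b) has_derivative (\<lambda>v. (D * fst v) *\<^sub>R b)) (at y)"
proof -
  have "((\<lambda>y. \<phi> (fst y)) has_derivative (\<lambda>v. D * fst v)) (at y)"
    using has_derivative_compose[OF has_derivative_fst[OF has_derivative_ident] assms[unfolded has_field_derivative_def]]
    by simp
  then show ?thesis by (rule has_derivative_scaleR_left)
qed

lemma deriv_scaled:
  fixes \<eta> :: "real \<Rightarrow> real"
  assumes "\<forall>t. (\<eta> has_real_derivative \<eta>1 t) (at t)" "e \<noteq> 0"
  shows "((\<lambda>s. \<eta> (s / e)) has_real_derivative \<eta>1 (s / e) / e) (at s)"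
proof -
  have "((\<lambda>s. \<eta> (s / e)) has_real_derivative \<eta>1 (s / e) * (1 / e)) (at s)"
    by (rule DERIV_chain2[OF assms(1)[rule_format] DERIV_cdivide[OF DERIV_ident]])
  then show ?thesis by simp
qed

lemma Fc_deriv:
  fixes \<eta> :: "real \<Rightarrow> real"
  assumes d0: "\<forall>t. (\<eta> has_real_derivative \<eta>1 t) (at t)" and e: "e \<noteq> 0"
  shows "(Fc \<eta> b c e has_derivative (\<lambda>v. (ec \<eta> \<eta>1 c e y * fst v) *\<^sub>R b)) (at y)"
proof -
  define \<phi> where "\<phi> s = (\<eta> (s / e) - c) * s ^ 2" for s
  have h1: "((\<lambda>s. \<eta> (s / e)) has_real_derivative \<eta>1 (s / e) / e) (at s)" for s
    by (rule deriv_scaled[OF d0 e])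
  have "(\<phi> has_real_derivative (\<eta>1 (s / e) / e) * s^2 + 2 * s * (\<eta> (s / e) - c)) (at s)" for s
  proof -
    have "((\<lambda>s. (\<eta> (s / e) - c) * s ^ 2) has_real_derivative
        (\<eta>1 (s / e) / e - 0) * s^2 + (real 2 * s ^ (2 - Suc 0)) * (\<eta> (s / e) - c)) (at s)"
      by (rule DERIV_mult[OF DERIV_diff[OF h1 DERIV_const] DERIV_pow])
    then show ?thesis unfolding \<phi>_def by (simp add: algebra_simps)
  qed
  then have "((\<lambda>y. \<phi> (fst y) *\<^sub>R b) has_derivative (\<lambda>v. (((\<eta>1 (fst y / e) / e) * fst y^2 + 2 * fst y * (\<eta> (fst y / e) - c)) * fst v) *\<^sub>R b)) (at y)"
    by (rule comp_fst_deriv)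
  moreover have "Fc \<eta> b c e = (\<lambda>y. \<phi> (fst y) *\<^sub>R b)" unfolding Fc_def \<phi>_def by (rule ext) simp
  moreover have "ec \<eta> \<eta>1 c e y = (\<eta>1 (fst y / e) / e) * fst y^2 + 2 * fst y * (\<eta> (fst y / e) - c)"
    unfolding ec_def by simp
  ultimately show ?thesis by simp
qed

lemma ec_deriv:
  fixes \<eta> :: "real \<Rightarrow> real"
  assumes d0: "\<forall>t. (\<eta> has_real_derivative \<eta>1 t) (at t)"
    and d1: "\<forall>t. (\<eta>1 has_real_derivative \<eta>2 t) (at t)" and e: "e \<noteq> 0"
  shows "((\<lambda>y. (a * ec \<eta> \<eta>1 c e y) *\<^sub>R b) has_derivative (\<lambda>v. (a * e2c \<eta> \<eta>1 \<eta>2 c e y * fst v) *\<^sub>R b)) (at y)"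
proof -
  define \<psi> where "\<psi> s = a * (\<eta>1 (s / e) * s ^ 2 / e + 2 * s * (\<eta> (s / e) - c))" for s
  have h0: "((\<lambda>s. \<eta> (s / e)) has_real_derivative \<eta>1 (s / e) / e) (at s)" for s
    by (rule deriv_scaled[OF d0 e])
  have h1: "((\<lambda>s. \<eta>1 (s / e)) has_real_derivative \<eta>2 (s / e) / e) (at s)" for s
    by (rule deriv_scaled[OF d1 e])
  have "(\<psi> has_real_derivative a * (\<eta>2 (s / e) * s ^ 2 / e ^ 2 + 4 * \<eta>1 (s / e) * s / e + 2 * (\<eta> (s / e) - c))) (at s)" for s
  proof -
    have A: "((\<lambda>s. \<eta>1 (s / e) * s ^ 2 / e) has_real_derivative
         ((\<eta>2 (s / e) / e) * s^2 + (real 2 * s ^ (2 - Suc 0)) * \<eta>1 (s / e)) / e) (at s)"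
      by (rule DERIV_cdivide[OF DERIV_mult[OF h1 DERIV_pow]])
    have B: "((\<lambda>s. 2 * s * (\<eta> (s / e) - c)) has_real_derivative
         (2 * 1) * (\<eta> (s / e) - c) + (\<eta>1 (s / e) / e - 0) * (2 * s)) (at s)"
      by (rule DERIV_mult[OF DERIV_cmult[OF DERIV_ident] DERIV_diff[OF h0 DERIV_const]])
    have "(\<psi> has_real_derivative a * ((((\<eta>2 (s / e) / e) * s^2 + (real 2 * s ^ (2 - Suc 0)) * \<eta>1 (s / e)) / e)
          + ((2 * 1) * (\<eta> (s / e) - c) + (\<eta>1 (s / e) / e - 0) * (2 * s)))) (at s)"
      unfolding \<psi>_def by (rule DERIV_cmult[OF DERIV_add[OF A B]])
    then show ?thesis by (rule DERIV_cong) (use e in \<open>simp add: field_simps power2_eq_square\<close>)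
  qed
  then have "((\<lambda>y. \<psi> (fst y) *\<^sub>R b) has_derivative (\<lambda>v. (a * (\<eta>2 (fst y / e) * fst y ^ 2 / e ^ 2 + 4 * \<eta>1 (fst y / e) * fst y / e + 2 * (\<eta> (fst y / e) - c)) * fst v) *\<^sub>R b)) (at y)"
    by (rule comp_fst_deriv)
  moreover have "(\<lambda>y. (a * ec \<eta> \<eta>1 c e y) *\<^sub>R b) = (\<lambda>y. \<psi> (fst y) *\<^sub>R b)" unfolding ec_def \<psi>_def by (rule ext) simp
  ultimately show ?thesis unfolding e2c_def by simp
qed


lemma dd_fun: "dd v f = (\<lambda>x. frechet_derivative f (at x) v)"
  by (rule ext) (simp add: dd_def)

lemma component:
  fixes g ge P F :: "real \<times> real \<Rightarrow> real \<times> real"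
  assumes K: "open K" "x \<in> K" and gK: "\<forall>y\<in>K. g y = P y" and geK: "\<forall>y\<in>K. ge y = P y + F y"
    and Pd: "P differentiable (at x)"
    and Fd: "\<And>y. (F has_derivative (\<lambda>v. (e y * fst v) *\<^sub>R b)) (at y)"
    and ed: "\<And>a y. ((\<lambda>y. (a * e y) *\<^sub>R b) has_derivative (\<lambda>v. (a * e2 y * fst v) *\<^sub>R b)) (at y)"
  shows "frechet_derivative g (at x) = frechet_derivative P (at x)"
    and "frechet_derivative ge (at x) = (\<lambda>v. frechet_derivative g (at x) v + (e x * fst v) *\<^sub>R b)"
    and "dd i (\<lambda>y. ge y - g y) x = (e x * fst i) *\<^sub>R b"
    and "dd j (dd i (\<lambda>y. ge y - g y)) x = (fst i * e2 x * fst j) *\<^sub>R b"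
    and "ge x - g x = F x"
proof -
  show g1: "frechet_derivative g (at x) = frechet_derivative P (at x)"
    by (rule frechet_eq_open[OF K gK])
  have "(P has_derivative frechet_derivative P (at x)) (at x)"
    using Pd frechet_derivative_works by blast
  then have "((\<lambda>y. P y + F y) has_derivative (\<lambda>v. frechet_derivative P (at x) v + (e x * fst v) *\<^sub>R b)) (at x)"
    by (rule has_derivative_add[OF _ Fd])
  then have "frechet_derivative (\<lambda>y. P y + F y) (at x) = (\<lambda>v. frechet_derivative P (at x) v + (e x * fst v) *\<^sub>R b)"
    by (rule frechet_derivative_at[symmetric])
  moreover have "frechet_derivative ge (at x) = frechet_derivative (\<lambda>y. P y + F y) (at x)"
    by (rule frechet_eq_open[OF K geK])
  ultimately show "frechet_derivative ge (at x) = (\<lambda>v. frechet_derivative g (at x) v + (e x * fst v) *\<^sub>R b)"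
    using g1 by simp
  have diffK: "\<forall>y\<in>K. ge y - g y = F y" using gK geK by simp
  have ddK: "dd i (\<lambda>y. ge y - g y) y = (e y * fst i) *\<^sub>R b" if "y \<in> K" for y i
  proof -
    have "frechet_derivative (\<lambda>y. ge y - g y) (at y) = frechet_derivative F (at y)"
      by (rule frechet_eq_open[OF K(1) that diffK])
    also have "\<dots> = (\<lambda>v. (e y * fst v) *\<^sub>R b)" by (rule frechet_derivative_at[OF Fd, symmetric])
    finally show ?thesis by (simp add: dd_def)
  qed
  show "dd i (\<lambda>y. ge y - g y) x = (e x * fst i) *\<^sub>R b" by (rule ddK[OF K(2)])
  have "frechet_derivative (dd i (\<lambda>y. ge y - g y)) (at x) = frechet_derivative (\<lambda>y. (fst i * e y) *\<^sub>R b) (at x)"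
    by (rule frechet_eq_open[OF K]) (simp add: ddK mult.commute)
  also have "\<dots> = (\<lambda>v. (fst i * e2 x * fst v) *\<^sub>R b)" by (rule frechet_derivative_at[OF ed, symmetric])
  finally show "dd j (dd i (\<lambda>y. ge y - g y)) x = (fst i * e2 x * fst j) *\<^sub>R b"
    by (simp add: dd_def)
  show "ge x - g x = F x" using diffK K(2) by blast
qed

lemma geps_minus:
  fixes \<eta> :: "real \<Rightarrow> real"
  assumes b: "\<forall>x. Pp x = Pm x + (fst x)^2 *\<^sub>R b" and gm: "\<forall>x\<in>Qminus. g x = Pm x"
    and eta0: "\<forall>t\<le>-1. \<eta> t = 0" and e: "0 < e" and y: "y \<in> Qminus"
  shows "g_eps \<eta> Pm Pp g e y = Pm y + Fc \<eta> b 0 e y"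
proof (cases "\<bar>fst y\<bar> < e")
  case True
  have "Pp y = Pm y + (fst y)^2 *\<^sub>R b" using b by blast
  then show ?thesis unfolding g_eps_def Fc_def using True by simp
next
  case False
  then have "fst y \<le> - e" using y unfolding Qminus_def by auto
  then have "fst y / e \<le> -1" using e by (simp add: divide_le_eq)
  then have "\<eta> (fst y / e) = 0" using eta0 by simp
  then show ?thesis unfolding g_eps_def Fc_def using False gm y by simp
qed

lemma geps_plus:
  fixes \<eta> :: "real \<Rightarrow> real"
  assumes b: "\<forall>x. Pp x = Pm x + (fst x)^2 *\<^sub>R b" and gp: "\<forall>x\<in>Qplus. g x = Pp x"
    and eta1: "\<forall>t\<ge>1. \<eta> t = 1" and e: "0 < e" and y: "y \<in> Qplus"
  shows "g_eps \<eta> Pm Pp g e y = Pp y + Fc \<eta> b 1 e y"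
proof (cases "\<bar>fst y\<bar> < e")
  case True
  have "Pp y = Pm y + (fst y)^2 *\<^sub>R b" using b by blast
  then show ?thesis unfolding g_eps_def Fc_def using True by (simp add: algebra_simps)
next
  case False
  then have "fst y \<ge> e" using y unfolding Qplus_def by auto
  then have "fst y / e \<ge> 1" using e by (simp add: le_divide_eq)
  then have "\<eta> (fst y / e) = 1" using eta1 by simp
  then show ?thesis unfolding g_eps_def Fc_def using False gp y by simp
qed


lemma abs_mul_le: "\<bar>a\<bar> \<le> A \<Longrightarrow> \<bar>u\<bar> \<le> U \<Longrightarrow> \<bar>a * u\<bar> \<le> A * (U::real)"
  by (simp add: abs_mult mult_mono')

lemma lin3: "W \<le> X + 4*Y + 2*Z \<Longrightarrow> X \<le> A \<Longrightarrow> Y \<le> B \<Longrightarrow> Z \<le> C \<Longrightarrow> W \<le> A + 4*B + 2*(C::real)"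
  by linarith

lemma bounds:
  fixes \<eta> \<eta>1 \<eta>2 :: "real \<Rightarrow> real"
  assumes M0: "\<forall>t. \<bar>\<eta> t\<bar> \<le> M0" and M1: "\<forall>t. \<bar>\<eta>1 t\<bar> \<le> M1" and M2: "\<forall>t. \<bar>\<eta>2 t\<bar> \<le> M2"
    and zl: "\<forall>t. t \<le> -1 \<longrightarrow> \<eta>1 t = 0 \<and> \<eta>2 t = 0" and zr: "\<forall>t. t \<ge> 1 \<longrightarrow> \<eta>1 t = 0 \<and> \<eta>2 t = 0"
    and eta0: "\<forall>t\<le>-1. \<eta> t = 0" and eta1: "\<forall>t\<ge>1. \<eta> t = 1"
    and e: "0 < e" and c: "c = 0 \<or> c = 1" and cl: "fst y \<le> -e \<longrightarrow> c = 0" and cr: "fst y \<ge> e \<longrightarrow> c = 1"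
  shows "\<bar>(\<eta> (fst y / e) - c) * fst y ^ 2\<bar> \<le> (M0 + 1) * e^2 * (if \<bar>fst y\<bar> < e then 1 else 0)"
    and "\<bar>ec \<eta> \<eta>1 c e y\<bar> \<le> (M1 + 2 * (M0 + 1)) * e * (if \<bar>fst y\<bar> < e then 1 else 0)"
    and "\<bar>e2c \<eta> \<eta>1 \<eta>2 c e y\<bar> \<le> (M2 + 4 * M1 + 2 * (M0 + 1)) * (if \<bar>fst y\<bar> < e then 1 else 0)"
proof -
  have "\<bar>fst y\<bar> < e \<or> fst y \<le> -e \<or> fst y \<ge> e" by linarith
  then have "\<bar>(\<eta> (fst y / e) - c) * fst y ^ 2\<bar> \<le> (M0 + 1) * e^2 * (if \<bar>fst y\<bar> < e then 1 else 0)
    \<and> \<bar>ec \<eta> \<eta>1 c e y\<bar> \<le> (M1 + 2 * (M0 + 1)) * e * (if \<bar>fst y\<bar> < e then 1 else 0)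
    \<and> \<bar>e2c \<eta> \<eta>1 \<eta>2 c e y\<bar> \<le> (M2 + 4 * M1 + 2 * (M0 + 1)) * (if \<bar>fst y\<bar> < e then 1 else 0)"
  proof (elim disjE)
    assume in_: "\<bar>fst y\<bar> < e"
    define t where "t = fst y / e"
    have hfy: "fst y = t * e" using e unfolding t_def by simp
    have t1: "\<bar>t\<bar> \<le> 1"
    proof -
      have "\<bar>t\<bar> = \<bar>fst y\<bar> / e" using e by (simp add: t_def abs_divide)
      also have "\<dots> \<le> 1" using in_ e by (simp add: divide_le_eq)
      finally show ?thesis .
    qed
    have t2: "\<bar>t^2\<bar> \<le> 1"
    proof -
      have "\<bar>t\<bar>^2 \<le> 1" by (rule power_le_one[OF abs_ge_zero t1])
      then show ?thesis by (simp add: power_abs)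
    qed
    have cabs: "\<bar>c\<bar> \<le> 1" using c by auto
    have ec1: "\<bar>\<eta> t - c\<bar> \<le> M0 + 1"
      using abs_triangle_ineq4[of "\<eta> t" c] M0[rule_format, of t] cabs by linarith
    have A: "(\<eta> (fst y / e) - c) * fst y ^ 2 = ((\<eta> t - c) * t^2) * e^2"
      using e by (simp add: hfy power_mult_distrib)
    have A1: "\<bar>(\<eta> t - c) * t^2\<bar> \<le> (M0 + 1) * 1" by (rule abs_mul_le[OF ec1 t2])
    have B: "ec \<eta> \<eta>1 c e y = (\<eta>1 t * t^2) * e + (2 * e) * (t * (\<eta> t - c))"
      unfolding ec_def using e by (simp add: hfy power2_eq_square field_simps)
    have B1: "\<bar>\<eta>1 t * t^2\<bar> \<le> M1 * 1" by (rule abs_mul_le[OF M1[rule_format] t2])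
    have B2: "\<bar>t * (\<eta> t - c)\<bar> \<le> 1 * (M0 + 1)" by (rule abs_mul_le[OF t1 ec1])
    have C: "e2c \<eta> \<eta>1 \<eta>2 c e y = \<eta>2 t * t^2 + 4 * (\<eta>1 t * t) + 2 * (\<eta> t - c)"
      unfolding e2c_def using e by (simp add: hfy power2_eq_square field_simps)
    have C1: "\<bar>\<eta>2 t * t^2\<bar> \<le> M2 * 1" by (rule abs_mul_le[OF M2[rule_format] t2])
    have C2: "\<bar>\<eta>1 t * t\<bar> \<le> M1 * 1" by (rule abs_mul_le[OF M1[rule_format] t1])
    have P1: "\<bar>((\<eta> t - c) * t^2) * e^2\<bar> \<le> ((M0 + 1) * 1) * e^2"
      by (rule abs_mul_le[OF A1]) simp
    have P2: "\<bar>(\<eta>1 t * t^2) * e\<bar> \<le> (M1 * 1) * e" by (rule abs_mul_le[OF B1]) (use e in simp)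
    have P3: "\<bar>(2 * e) * (t * (\<eta> t - c))\<bar> \<le> (2 * e) * (1 * (M0 + 1))" by (rule abs_mul_le[OF _ B2]) (use e in simp)
    have r1: "\<bar>(\<eta> (fst y / e) - c) * fst y ^ 2\<bar> \<le> (M0 + 1) * e^2" using A P1 by simp
    have r2: "\<bar>ec \<eta> \<eta>1 c e y\<bar> \<le> (M1 + 2 * (M0 + 1)) * e"
    proof -
      have "\<bar>ec \<eta> \<eta>1 c e y\<bar> \<le> \<bar>(\<eta>1 t * t^2) * e\<bar> + \<bar>(2 * e) * (t * (\<eta> t - c))\<bar>"
        unfolding B by (rule abs_triangle_ineq)
      also have "\<dots> \<le> (M1 * 1) * e + (2 * e) * (1 * (M0 + 1))" using P2 P3 by linarith
      also have "\<dots> = (M1 + 2 * (M0 + 1)) * e" by (simp add: algebra_simps)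
      finally show ?thesis .
    qed
    have r3: "\<bar>e2c \<eta> \<eta>1 \<eta>2 c e y\<bar> \<le> M2 + 4 * M1 + 2 * (M0 + 1)"
    proof -
      have "\<bar>e2c \<eta> \<eta>1 \<eta>2 c e y\<bar> \<le> \<bar>\<eta>2 t * t^2\<bar> + \<bar>4 * (\<eta>1 t * t)\<bar> + \<bar>2 * (\<eta> t - c)\<bar>"
      proof -
        have "\<bar>\<eta>2 t * t^2 + 4 * (\<eta>1 t * t) + 2 * (\<eta> t - c)\<bar> \<le> \<bar>\<eta>2 t * t^2 + 4 * (\<eta>1 t * t)\<bar> + \<bar>2 * (\<eta> t - c)\<bar>"
          by (rule abs_triangle_ineq)
        moreover have "\<bar>\<eta>2 t * t^2 + 4 * (\<eta>1 t * t)\<bar> \<le> \<bar>\<eta>2 t * t^2\<bar> + \<bar>4 * (\<eta>1 t * t)\<bar>"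
          by (rule abs_triangle_ineq)
        ultimately show ?thesis unfolding C by linarith
      qed
      moreover have "\<bar>2 * (\<eta> t - c)\<bar> = 2 * \<bar>\<eta> t - c\<bar>" "\<bar>4 * (\<eta>1 t * t)\<bar> = 4 * \<bar>\<eta>1 t * t\<bar>"
        by (simp_all only: abs_mult abs_numeral)
      ultimately show ?thesis using lin3[of "\<bar>e2c \<eta> \<eta>1 \<eta>2 c e y\<bar>" "\<bar>\<eta>2 t * t^2\<bar>" "\<bar>\<eta>1 t * t\<bar>" "\<bar>\<eta> t - c\<bar>" M2 M1 "M0 + 1"] C1 C2 ec1
        by simp
    qed
    show ?thesis using r1 r2 r3 in_ by simp
  next
    assume l: "fst y \<le> -e"
    then have "fst y / e \<le> -1" using e by (simp add: divide_le_eq)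
    moreover have "\<not> \<bar>fst y\<bar> < e" using l by simp
    ultimately have "\<eta> (fst y / e) = 0" "\<eta>1 (fst y / e) = 0" "\<eta>2 (fst y / e) = 0" "c = 0" "\<not> \<bar>fst y\<bar> < e"
      using zl eta0 cl l by auto
    then show ?thesis unfolding ec_def e2c_def by simp
  next
    assume r: "fst y \<ge> e"
    then have "fst y / e \<ge> 1" using e by (simp add: le_divide_eq)
    moreover have "\<not> \<bar>fst y\<bar> < e" using r e by simp
    ultimately have "\<eta> (fst y / e) = 1" "\<eta>1 (fst y / e) = 0" "\<eta>2 (fst y / e) = 0" "c = 1" "\<not> \<bar>fst y\<bar> < e"
      using zr eta1 cr r by auto
    then show ?thesis unfolding ec_def e2c_def by simp
  qed
  then show "\<bar>(\<eta> (fst y / e) - c) * fst y ^ 2\<bar> \<le> (M0 + 1) * e^2 * (if \<bar>fst y\<bar> < e then 1 else 0)"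
    and "\<bar>ec \<eta> \<eta>1 c e y\<bar> \<le> (M1 + 2 * (M0 + 1)) * e * (if \<bar>fst y\<bar> < e then 1 else 0)"
    and "\<bar>e2c \<eta> \<eta>1 \<eta>2 c e y\<bar> \<le> (M2 + 4 * M1 + 2 * (M0 + 1)) * (if \<bar>fst y\<bar> < e then 1 else 0)"
    by blast+
qed


lemma poly_diff: "poly_map_deg2 P \<Longrightarrow> P differentiable (at z)"
  using poly_Ck[of P 1] by (cases z) (simp add: differentiable_on_eq_differentiable_at)

theorem proposition3p2:
  fixes g Pm Pp :: "real \<times> real \<Rightarrow> real \<times> real"
    and \<eta> :: "real \<Rightarrow> real" and lam :: real
  assumes Pm: "poly_map_deg2 Pm" and Pp: "poly_map_deg2 Pp"
    and gm: "\<forall>x\<in>Qminus. g x = Pm x" and gp: "\<forall>x\<in>Qplus. g x = Pp x"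
    and gC1: "Ck 1 Square g"
    and lam: "lam > 0"
    and det: "\<forall>x\<in>Qminus \<union> Qplus. jdet (frechet_derivative g (at x)) \<ge> lam"
    and eta: "smooth_on (UNIV :: real set) \<eta>"
    and eta0: "\<forall>t\<le>-1. \<eta> t = 0" and eta1: "\<forall>t\<ge>1. \<eta> t = 1"
  shows "(\<forall>\<epsilon>. 0 < \<epsilon> \<and> \<epsilon> < 1 \<longrightarrow> smooth_on (Qminus \<union> Qplus) (g_eps \<eta> Pm Pp g \<epsilon>))
    \<and> (\<forall>\<epsilon>. 0 < \<epsilon> \<and> \<epsilon> < 1 \<longrightarrow>
          (\<forall>x\<in>Qminus \<union> Qplus. \<bar>fst x\<bar> \<ge> \<epsilon> \<longrightarrow> g_eps \<eta> Pm Pp g \<epsilon> x = g x))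
    \<and> ((\<lambda>\<epsilon>. W21_dist (Qminus \<union> Qplus) (g_eps \<eta> Pm Pp g \<epsilon>) g) \<longlongrightarrow> 0) (at_right 0)
    \<and> (\<exists>C. \<forall>\<epsilon>. 0 < \<epsilon> \<and> \<epsilon> < 1 \<longrightarrow> (\<forall>x\<in>Qminus \<union> Qplus.
          onorm (\<lambda>v. frechet_derivative (g_eps \<eta> Pm Pp g \<epsilon>) (at x) v
                      - frechet_derivative g (at x) v) \<le> C * \<epsilon>))
    \<and> (\<forall>\<^sub>F \<epsilon> in at_right 0. \<forall>x\<in>Qminus \<union> Qplus.
          jdet (frechet_derivative (g_eps \<eta> Pm Pp g \<epsilon>) (at x)) \<ge> lam / 2)"
proof -
  obtain b where b: "\<forall>x. Pp x = Pm x + (fst x)^2 *\<^sub>R b"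
    using interface_b[OF Pm Pp gm gp gC1] by blast
  obtain \<eta>1 \<eta>2 M0 M1 M2 where d0: "\<forall>t. (\<eta> has_real_derivative \<eta>1 t) (at t)"
     and d1: "\<forall>t. (\<eta>1 has_real_derivative \<eta>2 t) (at t)"
     and M0: "\<forall>t. \<bar>\<eta> t\<bar> \<le> M0" and M1: "\<forall>t. \<bar>\<eta>1 t\<bar> \<le> M1" and M2: "\<forall>t. \<bar>\<eta>2 t\<bar> \<le> M2"
     and zl: "\<forall>t. t \<le> -1 \<longrightarrow> \<eta>1 t = 0 \<and> \<eta>2 t = 0" and zr: "\<forall>t. t \<ge> 1 \<longrightarrow> \<eta>1 t = 0 \<and> \<eta>2 t = 0"
    using eta_facts[OF eta eta0 eta1] by blast
  define U where "U = Qminus \<union> Qplus"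
  have oU: "open U" unfolding U_def by (intro open_Un open_Qminus open_Qplus)
  define cc where "cc x = (if fst x > 0 then 1 else 0::real)" for x :: "real \<times> real"
  define ge where "ge e = g_eps \<eta> Pm Pp g e" for e
  have key: "frechet_derivative (ge e) (at x) = (\<lambda>v. frechet_derivative g (at x) v + (ec \<eta> \<eta>1 (cc x) e x * fst v) *\<^sub>R b)
     \<and> (\<forall>i. dd i (\<lambda>y. ge e y - g y) x = (ec \<eta> \<eta>1 (cc x) e x * fst i) *\<^sub>R b)
     \<and> (\<forall>i j. dd j (dd i (\<lambda>y. ge e y - g y)) x = (fst i * e2c \<eta> \<eta>1 \<eta>2 (cc x) e x * fst j) *\<^sub>R b)
     \<and> ge e x - g x = Fc \<eta> b (cc x) e x
     \<and> (frechet_derivative g (at x) = frechet_derivative Pm (at x) \<or> frechet_derivative g (at x) = frechet_derivative Pp (at x))"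
    if e: "0 < e" and x: "x \<in> U" for e x
  proof -
    have e0: "e \<noteq> 0" using e by simp
    have Fd: "\<And>c y. (Fc \<eta> b c e has_derivative (\<lambda>v. (ec \<eta> \<eta>1 c e y * fst v) *\<^sub>R b)) (at y)"
      by (rule Fc_deriv[OF d0 e0])
    have ed: "\<And>c a y. ((\<lambda>y. (a * ec \<eta> \<eta>1 c e y) *\<^sub>R b) has_derivative (\<lambda>v. (a * e2c \<eta> \<eta>1 \<eta>2 c e y * fst v) *\<^sub>R b)) (at y)"
      by (rule ec_deriv[OF d0 d1 e0])
    show ?thesis
    proof (cases "x \<in> Qminus")
      case True
      have c0: "cc x = 0" using True unfolding cc_def Qminus_def by auto
      have geK: "\<forall>y\<in>Qminus. ge e y = Pm y + Fc \<eta> b 0 e y"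
        unfolding ge_def using geps_minus[OF b gm eta0 e] by blast
      note C = component[OF open_Qminus True gm geK poly_diff[OF Pm] Fd ed]
      show ?thesis unfolding c0 using C by blast
    next
      case False
      then have xp: "x \<in> Qplus" using x unfolding U_def by blast
      have c1: "cc x = 1" using xp unfolding cc_def Qplus_def by auto
      have geK: "\<forall>y\<in>Qplus. ge e y = Pp y + Fc \<eta> b 1 e y"
        unfolding ge_def using geps_plus[OF b gp eta1 e] by blast
      note C = component[OF open_Qplus xp gp geK poly_diff[OF Pp] Fd ed]
      show ?thesis unfolding c1 using C by blast
    qed
  qed
  define K0 where "K0 = M0 + 1"
  define K1 where "K1 = M1 + 2 * (M0 + 1)"
  define K2 where "K2 = M2 + 4 * M1 + 2 * (M0 + 1)"
  have m0: "M0 \<ge> 0" using M0 abs_ge_zero order_trans by blast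
  have m1: "M1 \<ge> 0" using M1 abs_ge_zero order_trans by blast
  have m2: "M2 \<ge> 0" using M2 abs_ge_zero order_trans by blast
  have K0p: "K0 \<ge> 0" and K1p: "K1 \<ge> 0" and K2p: "K2 \<ge> 0" unfolding K0_def K1_def K2_def using m0 m1 m2 by auto
  have bnd: "\<bar>(\<eta> (fst x / e) - cc x) * fst x ^ 2\<bar> \<le> K0 * e^2 * (if \<bar>fst x\<bar> < e then 1 else 0)
      \<and> \<bar>ec \<eta> \<eta>1 (cc x) e x\<bar> \<le> K1 * e * (if \<bar>fst x\<bar> < e then 1 else 0)
      \<and> \<bar>e2c \<eta> \<eta>1 \<eta>2 (cc x) e x\<bar> \<le> K2 * (if \<bar>fst x\<bar> < e then 1 else 0)"
    if e: "0 < e" for e x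
  proof -
    have c: "cc x = 0 \<or> cc x = 1" unfolding cc_def by simp
    have cl: "fst x \<le> -e \<longrightarrow> cc x = 0" using e unfolding cc_def by simp
    have cr: "fst x \<ge> e \<longrightarrow> cc x = 1" using e unfolding cc_def by simp
    note B = bounds[OF M0 M1 M2 zl zr eta0 eta1 e c cl cr]
    show ?thesis using B unfolding K0_def K1_def K2_def by blast
  qed
  have ec_le: "\<bar>ec \<eta> \<eta>1 (cc x) e x\<bar> \<le> K1 * e" if e: "0 < e" for e x
  proof -
    have "K1 * e * (if \<bar>fst x\<bar> < e then 1 else 0) \<le> K1 * e" using K1p e by simp
    then show ?thesis using bnd[OF e, of x] by linarith
  qed
  have part2: "\<forall>\<epsilon>. 0 < \<epsilon> \<and> \<epsilon> < 1 \<longrightarrow> (\<forall>x\<in>U. \<bar>fst x\<bar> \<ge> \<epsilon> \<longrightarrow> ge \<epsilon> x = g x)"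
    unfolding ge_def g_eps_def by auto
  have part1: "\<forall>\<epsilon>. 0 < \<epsilon> \<and> \<epsilon> < 1 \<longrightarrow> smooth_on U (ge \<epsilon>)"
  proof (intro allI impI)
    fix e :: real assume "0 < e \<and> e < 1"
    then have e: "0 < e" by simp
    define G where "G y = Pm y + (\<eta> (fst y / e) * fst y ^ 2) *\<^sub>R b" for y
    have "Ck n UNIV (\<lambda>y. Pm y + (\<eta> (fst y / e) * fst y ^ 2) *\<^sub>R b)" for n
      by (rule Ck_add[OF open_UNIV poly_Ck[OF Pm] Ck_scaleR[OF open_UNIV Ck_mult[OF open_UNIV
            Ck_comp_fst[OF smooth_Ck[OF eta]] Ck_power[OF open_UNIV Ck_fst[OF open_UNIV]]] Ck_const[OF open_UNIV]]])
    then have CG: "Ck n U G" for n unfolding G_def using Ck_subset by blast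
    have eqG: "\<forall>y\<in>U. G y = ge e y"
    proof
      fix y assume y: "y \<in> U"
      have by_: "Pp y = Pm y + (fst y)^2 *\<^sub>R b" using b by blast
      show "G y = ge e y"
      proof (cases "y \<in> Qminus")
        case True
        then show ?thesis unfolding ge_def G_def using geps_minus[OF b gm eta0 e True] by (simp add: Fc_def)
      next
        case False
        then have "y \<in> Qplus" using y unfolding U_def by blast
        then have "ge e y = Pp y + Fc \<eta> b 1 e y" unfolding ge_def by (rule geps_plus[OF b gp eta1 e])
        then show ?thesis unfolding G_def Fc_def by_ by (simp add: algebra_simps)
      qed
    qed
    show "smooth_on U (ge e)" unfolding smooth_on_def using Ck_transfer[OF oU eqG CG] by blast
  qed
  have part4: "\<forall>\<epsilon>. 0 < \<epsilon> \<and> \<epsilon> < 1 \<longrightarrow> (\<forall>x\<in>U.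
          onorm (\<lambda>v. frechet_derivative (ge \<epsilon>) (at x) v - frechet_derivative g (at x) v) \<le> (K1 * norm b) * \<epsilon>)"
  proof (intro allI impI ballI)
    fix e :: real and x assume "0 < e \<and> e < 1" and x: "x \<in> U"
    then have e: "0 < e" by simp
    have "onorm (\<lambda>v. frechet_derivative (ge e) (at x) v - frechet_derivative g (at x) v)
        = onorm (\<lambda>v::real\<times>real. (ec \<eta> \<eta>1 (cc x) e x * fst v) *\<^sub>R b)"
      using key[OF e x] by simp
    also have "\<dots> \<le> (K1 * norm b) * e"
    proof (rule onorm_le)
      fix v :: "real \<times> real"
      have "norm ((ec \<eta> \<eta>1 (cc x) e x * fst v) *\<^sub>R b) = \<bar>ec \<eta> \<eta>1 (cc x) e x\<bar> * \<bar>fst v\<bar> * norm b"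
        by (simp add: abs_mult)
      also have "\<dots> \<le> (K1 * e) * norm v * norm b"
      proof -
        have fv: "\<bar>fst v\<bar> \<le> norm v" using norm_fst_le[of "fst v" "snd v"] by simp
        have "0 \<le> K1 * e" using K1p e by simp
        then show ?thesis by (intro mult_right_mono mult_mono ec_le[OF e] fv) auto
      qed
      finally show "norm ((ec \<eta> \<eta>1 (cc x) e x * fst v) *\<^sub>R b) \<le> K1 * norm b * e * norm v"
        by (simp add: algebra_simps)
    qed
    finally show "onorm (\<lambda>v. frechet_derivative (ge e) (at x) v - frechet_derivative g (at x) v) \<le> (K1 * norm b) * e" .
  qed
  have bdP: "\<exists>B. \<forall>x\<in>{-1..1} \<times> {-1..1}. norm (frechet_derivative P (at x) (0,1)) \<le> B" if P: "poly_map_deg2 P" for P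
  proof -
    have "continuous_on UNIV (\<lambda>x. frechet_derivative P (at x) (0,1))"
      using poly_Ck[OF P, of 1] by simp
    then have "compact ((\<lambda>x. frechet_derivative P (at x) (0,1)) ` ({-1..1} \<times> {-1..1}))"
      by (intro compact_continuous_image compact_Times compact_Icc) (auto intro: continuous_on_subset)
    then have "bounded ((\<lambda>x. frechet_derivative P (at x) (0,1)) ` ({-1..1} \<times> {-1..1}))"
      by (rule compact_imp_bounded)
    then show ?thesis unfolding bounded_iff by blast
  qed
  obtain B1 where B1: "\<forall>x\<in>{-1..1} \<times> {-1..1}. norm (frechet_derivative Pm (at x) (0,1)) \<le> B1"
    using bdP[OF Pm] by blast
  obtain B2 where B2: "\<forall>x\<in>{-1..1} \<times> {-1..1}. norm (frechet_derivative Pp (at x) (0,1)) \<le> B2"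
    using bdP[OF Pp] by blast
  define B where "B = max B1 B2"
  have US: "U \<subseteq> {-1..1} \<times> {-1..1}" unfolding U_def Qminus_def Qplus_def by auto
  have Bx: "norm (frechet_derivative g (at x) (0,1)) \<le> B" if e: "0 < e" and x: "x \<in> U" for e :: real and x
  proof -
    have xs: "x \<in> {-1..1} \<times> {-1..1}" using US x by blast
    have "frechet_derivative g (at x) = frechet_derivative Pm (at x) \<or> frechet_derivative g (at x) = frechet_derivative Pp (at x)"
      using key[OF e x] by blast
    then show ?thesis
    proof
      assume h: "frechet_derivative g (at x) = frechet_derivative Pm (at x)"
      have "norm (frechet_derivative Pm (at x) (0,1)) \<le> B1" using B1 xs by blast
      then show ?thesis unfolding h B_def by (rule max.coboundedI1)
    next
      assume h: "frechet_derivative g (at x) = frechet_derivative Pp (at x)"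
      have "norm (frechet_derivative Pp (at x) (0,1)) \<le> B2" using B2 xs by blast
      then show ?thesis unfolding h B_def by (rule max.coboundedI2)
    qed
  qed
  have B0: "B \<ge> 0"
  proof -
    have "(-1/2, 0) \<in> U" unfolding U_def Qminus_def by simp
    from Bx[OF _ this, of 1] show ?thesis using norm_ge_zero[of "frechet_derivative g (at (-1/2, 0)) (0,1)"] by linarith
  qed
  define A where "A = K1 * (2 * norm b * B)"
  have A0: "A \<ge> 0" unfolding A_def using K1p B0 by simp
  have jd: "jdet (\<lambda>v. L v + (a * fst v) *\<^sub>R b) = jdet L + a * (fst b * snd (L (0,1)) - snd b * fst (L (0,1)))" for L a
    by (simp add: jdet_def algebra_simps)
  have Qb: "\<bar>fst b * snd w - snd b * fst w\<bar> \<le> 2 * norm b * B" if w: "norm w \<le> B" for w :: "real \<times> real"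
  proof -
    have fb: "\<bar>fst b\<bar> \<le> norm b" using norm_fst_le[of "fst b" "snd b"] by simp
    have sb: "\<bar>snd b\<bar> \<le> norm b" using norm_snd_le[of "snd b" "fst b"] by simp
    have fw: "\<bar>fst w\<bar> \<le> B" using norm_fst_le[of "fst w" "snd w"] w by simp
    have sw: "\<bar>snd w\<bar> \<le> B" using norm_snd_le[of "snd w" "fst w"] w by simp
    have "\<bar>fst b * snd w\<bar> \<le> norm b * B" by (rule abs_mul_le[OF fb sw])
    moreover have "\<bar>snd b * fst w\<bar> \<le> norm b * B" by (rule abs_mul_le[OF sb fw])
    moreover have "\<bar>fst b * snd w - snd b * fst w\<bar> \<le> \<bar>fst b * snd w\<bar> + \<bar>snd b * fst w\<bar>"
      by (rule abs_triangle_ineq4)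
    ultimately show ?thesis by linarith
  qed
  define \<delta> where "\<delta> = min 1 (lam / (2 * (A + 1)))"
  have \<delta>0: "0 < \<delta>" unfolding \<delta>_def using lam A0 by simp
  have part5: "\<forall>\<^sub>F \<epsilon> in at_right 0. \<forall>x\<in>U. jdet (frechet_derivative (ge \<epsilon>) (at x)) \<ge> lam / 2"
  proof (rule eventually_at_rightI[OF _ \<delta>0])
    fix e :: real assume "e \<in> {0<..<\<delta>}"
    then have e: "0 < e" and e\<delta>: "e < \<delta>" by auto
    have Ae: "A * e \<le> lam / 2"
    proof -
      have "A * e \<le> (A + 1) * e" using e by simp
      also have "\<dots> \<le> (A + 1) * (lam / (2 * (A + 1)))"
        using e\<delta> A0 unfolding \<delta>_def by (intro mult_left_mono) auto
      also have "\<dots> = lam / 2" using A0 by (simp add: field_simps)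
      finally show ?thesis .
    qed
    show "\<forall>x\<in>U. jdet (frechet_derivative (ge e) (at x)) \<ge> lam / 2"
    proof
      fix x assume x: "x \<in> U"
      define L where "L = frechet_derivative g (at x)"
      define a where "a = ec \<eta> \<eta>1 (cc x) e x"
      have "jdet (frechet_derivative (ge e) (at x)) = jdet L + a * (fst b * snd (L (0,1)) - snd b * fst (L (0,1)))"
        using key[OF e x] jd unfolding L_def a_def by simp
      moreover have "jdet L \<ge> lam" using det x unfolding L_def U_def by blast
      moreover have "\<bar>a * (fst b * snd (L (0,1)) - snd b * fst (L (0,1)))\<bar> \<le> (K1 * e) * (2 * norm b * B)"
        by (rule abs_mul_le[OF ec_le[OF e, of x, folded a_def] Qb[OF Bx[OF e x, folded L_def]]])
      moreover have "(K1 * e) * (2 * norm b * B) = A * e" unfolding A_def by simp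
      ultimately show "jdet (frechet_derivative (ge e) (at x)) \<ge> lam / 2" using Ae by linarith
    qed
  qed
  define Kb where "Kb = (K0 + 2 * K1 + 4 * K2) * norm b"
  have Kb0: "Kb \<ge> 0" unfolding Kb_def using K0p K1p K2p by simp
  have Wle: "W21_dist U (ge e) g \<le> ennreal (Kb * (4 * e))" if e: "0 < e" "e < 1" for e :: real
  proof -
    define ind where "ind x = (if \<bar>fst x\<bar> < e then 1 else 0::real)" for x :: "real \<times> real"
    define f where "f x = norm (ge e x - g x) + (\<Sum>i\<in>Basis. norm (dd i (\<lambda>y. ge e y - g y) x))
       + (\<Sum>i\<in>Basis. \<Sum>j\<in>Basis. norm (dd j (dd i (\<lambda>y. ge e y - g y)) x))" for x
    have ind0: "ind x \<ge> 0" "ind x \<le> 1" for x unfolding ind_def by auto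
    have fb1: "\<bar>fst i\<bar> \<le> 1" if "i \<in> (Basis :: (real \<times> real) set)" for i
      using norm_fst_le[of "fst i" "snd i"] norm_Basis[OF that] by simp
    have cardB: "card (Basis :: (real \<times> real) set) = 2" by simp
    have fle: "f x \<le> Kb * ind x" if x: "x \<in> U" for x
    proof -
      note k = key[OF e(1) x]
      note bd = bnd[OF e(1), of x, folded ind_def]
      have e2: "e^2 \<le> 1" using e by (simp add: power_le_one)
      have t1: "norm (ge e x - g x) \<le> K0 * ind x * norm b"
      proof -
        have "ge e x - g x = Fc \<eta> b (cc x) e x" using k by blast
        then have "norm (ge e x - g x) = \<bar>(\<eta> (fst x / e) - cc x) * fst x ^ 2\<bar> * norm b"
          by (simp add: Fc_def)
        also have "\<dots> \<le> (K0 * e^2 * ind x) * norm b" using bd by (intro mult_right_mono) auto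
        also have "\<dots> \<le> K0 * ind x * norm b"
          using e2 K0p ind0[of x] by (intro mult_right_mono) (auto intro: mult_left_le mult_nonneg_nonneg simp: mult.commute mult.left_commute)
        finally show ?thesis .
      qed
      have t2: "norm (dd i (\<lambda>y. ge e y - g y) x) \<le> K1 * ind x * norm b" if i: "i \<in> Basis" for i
      proof -
        have "dd i (\<lambda>y. ge e y - g y) x = (ec \<eta> \<eta>1 (cc x) e x * fst i) *\<^sub>R b" using k by blast
        then have "norm (dd i (\<lambda>y. ge e y - g y) x) = (\<bar>ec \<eta> \<eta>1 (cc x) e x\<bar> * \<bar>fst i\<bar>) * norm b"
          by (simp add: abs_mult)
        also have "\<dots> \<le> ((K1 * e * ind x) * 1) * norm b"
          using bd fb1[OF i] by (intro mult_right_mono abs_mul_le[unfolded abs_mult]) auto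
        also have "\<dots> \<le> K1 * ind x * norm b"
        proof -
          have "e * ind x \<le> ind x" using mult_left_le_one_le[of "ind x" e] e ind0[of x] by simp
          then have "K1 * (e * ind x) \<le> K1 * ind x" using K1p by (rule mult_left_mono)
          then show ?thesis by (intro mult_right_mono) (simp_all add: mult.assoc)
        qed
        finally show ?thesis .
      qed
      have t3: "norm (dd j (dd i (\<lambda>y. ge e y - g y)) x) \<le> K2 * ind x * norm b" if i: "i \<in> Basis" and j: "j \<in> Basis" for i j
      proof -
        have "dd j (dd i (\<lambda>y. ge e y - g y)) x = (fst i * e2c \<eta> \<eta>1 \<eta>2 (cc x) e x * fst j) *\<^sub>R b" using k by blast
        then have "norm (dd j (dd i (\<lambda>y. ge e y - g y)) x) = (\<bar>fst i\<bar> * \<bar>e2c \<eta> \<eta>1 \<eta>2 (cc x) e x\<bar> * \<bar>fst j\<bar>) * norm b"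
          by (simp add: abs_mult)
        also have "\<dots> \<le> ((1 * (K2 * ind x)) * 1) * norm b"
        proof -
          have h1: "\<bar>fst i\<bar> * \<bar>e2c \<eta> \<eta>1 \<eta>2 (cc x) e x\<bar> \<le> 1 * (K2 * ind x)"
            by (rule mult_mono) (use fb1[OF i] bd in auto)
          have h2: "(\<bar>fst i\<bar> * \<bar>e2c \<eta> \<eta>1 \<eta>2 (cc x) e x\<bar>) * \<bar>fst j\<bar> \<le> (1 * (K2 * ind x)) * 1"
            by (rule mult_mono[OF h1 fb1[OF j]]) (use K2p ind0[of x] in auto)
          show ?thesis by (rule mult_right_mono[OF h2 norm_ge_zero])
        qed
        also have "\<dots> = K2 * ind x * norm b" by simp
        finally show ?thesis .
      qed
      have s2: "(\<Sum>i\<in>Basis. norm (dd i (\<lambda>y. ge e y - g y) x)) \<le> of_nat (card (Basis :: (real \<times> real) set)) * (K1 * ind x * norm b)"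
        by (rule sum_bounded_above) (rule t2)
      have s3: "(\<Sum>i\<in>Basis. \<Sum>j\<in>Basis. norm (dd j (dd i (\<lambda>y. ge e y - g y)) x))
          \<le> of_nat (card (Basis :: (real \<times> real) set)) * (of_nat (card (Basis :: (real \<times> real) set)) * (K2 * ind x * norm b))"
        by (rule sum_bounded_above, rule sum_bounded_above) (rule t3)
      show ?thesis using t1 s2 s3 unfolding f_def Kb_def cardB by (simp add: algebra_simps)
    qed
    define S where "S = box (-e, -1) (e, 1::real)"
    have memS: "x \<in> S \<longleftrightarrow> -e < fst x \<and> fst x < e \<and> -1 < snd x \<and> snd x < 1" for x
      unfolding S_def by (cases x) (auto simp: mem_box Basis_prod_def)
    have pw: "ennreal (f x) * indicator U x \<le> ennreal Kb * indicator S x" for x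
    proof (cases "x \<in> U")
      case False then show ?thesis by simp
    next
      case True
      show ?thesis
      proof (cases "\<bar>fst x\<bar> < e")
        case c: True
        have "x \<in> S" using True c unfolding memS U_def Qminus_def Qplus_def by auto
        moreover have "f x \<le> Kb" using fle[OF True] c unfolding ind_def by simp
        ultimately show ?thesis using True by (simp add: ennreal_leI)
      next
        case c: False
        have "f x \<le> 0" using fle[OF True] c unfolding ind_def by simp
        then have "ennreal (f x) = 0" by (simp add: ennreal_eq_0_iff)
        then show ?thesis by simp
      qed
    qed
    have "W21_dist U (ge e) g = (\<integral>\<^sup>+x. ennreal (f x) * indicator U x \<partial>lborel)"
      unfolding W21_dist_def f_def by simp
    also have "\<dots> \<le> (\<integral>\<^sup>+x. ennreal Kb * indicator S x \<partial>lborel)"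
      by (rule nn_integral_mono) (rule pw)
    also have "\<dots> = ennreal Kb * emeasure lborel S"
      by (rule nn_integral_cmult_indicator) (simp add: S_def)
    also have "emeasure lborel S = ennreal (4 * e)"
      unfolding S_def using e by (subst emeasure_lborel_box) (auto simp: Basis_prod_def)
    also have "ennreal Kb * ennreal (4 * e) = ennreal (Kb * (4 * e))"
      using Kb0 e by (simp add: ennreal_mult)
    finally show ?thesis .
  qed
  have part3: "((\<lambda>\<epsilon>. W21_dist U (ge \<epsilon>) g) \<longlongrightarrow> 0) (at_right 0)"
  proof (rule tendsto_sandwich[of "\<lambda>_. 0" _ _ "\<lambda>\<epsilon>. ennreal (Kb * (4 * \<epsilon>))"])
    show "\<forall>\<^sub>F \<epsilon> in at_right 0. 0 \<le> W21_dist U (ge \<epsilon>) g" by simp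
    show "\<forall>\<^sub>F \<epsilon> in at_right 0. W21_dist U (ge \<epsilon>) g \<le> ennreal (Kb * (4 * \<epsilon>))"
      by (rule eventually_at_rightI[of 0 1]) (auto intro: Wle)
    show "((\<lambda>_. 0) \<longlongrightarrow> (0::ennreal)) (at_right 0)" by simp
    have "((\<lambda>\<epsilon>. Kb * (4 * \<epsilon>)) \<longlongrightarrow> Kb * (4 * 0)) (at_right (0::real))"
      by (intro tendsto_intros)
    then have "((\<lambda>\<epsilon>. ennreal (Kb * (4 * \<epsilon>))) \<longlongrightarrow> ennreal 0) (at_right (0::real))"
      by (intro tendsto_ennrealI) simp
    then show "((\<lambda>\<epsilon>. ennreal (Kb * (4 * \<epsilon>))) \<longlongrightarrow> 0) (at_right (0::real))" by simp
  qed
  show ?thesis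
    unfolding U_def[symmetric] ge_def[symmetric]
  proof (intro conjI)
    show "\<forall>\<epsilon>. 0 < \<epsilon> \<and> \<epsilon> < 1 \<longrightarrow> smooth_on U (ge \<epsilon>)" by (rule part1)
    show "\<forall>\<epsilon>. 0 < \<epsilon> \<and> \<epsilon> < 1 \<longrightarrow> (\<forall>x\<in>U. \<epsilon> \<le> \<bar>fst x\<bar> \<longrightarrow> ge \<epsilon> x = g x)" by (rule part2)
    show "((\<lambda>\<epsilon>. W21_dist U (ge \<epsilon>) g) \<longlongrightarrow> 0) (at_right 0)" by (rule part3)
    show "\<exists>C. \<forall>\<epsilon>. 0 < \<epsilon> \<and> \<epsilon> < 1 \<longrightarrow> (\<forall>x\<in>U.
          onorm (\<lambda>v. frechet_derivative (ge \<epsilon>) (at x) v - frechet_derivative g (at x) v) \<le> C * \<epsilon>)"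
      by (rule exI[of _ "K1 * norm b"]) (rule part4)
    show "\<forall>\<^sub>F \<epsilon> in at_right 0. \<forall>x\<in>U. lam / 2 \<le> jdet (frechet_derivative (ge \<epsilon>) (at x))" by (rule part5)
  qed
qed

end
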